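(* Let $(X,d_X)$ and $(Y,d_Y)$ be geodesic spaces with monotone moduli of weak uniform convexity $\eta_X$ and $\eta_Y$, respectively. Let $\theta\in X$, $\tau\in Y$ and let $Z=X\sqcup_\theta Y$ be the gluing of $X$ and $Y$ obtained by identifying $\theta$ and $\tau$. Then $Z$ is weakly uniformly convex, with modulus of weak uniform convexity \[\eta(a,r,\varepsilon)=\begin{cases}\min\{\eta_X(a,r,\varepsilon),\ \eta_Y(\tau,r,\varepsilon)\varepsilon/2,\ \varepsilon/4,\ \eta_X(a,r,\varepsilon/4)\}, & a\in X,\\ \min\{\eta_Y(a,r,\varepsilon),\ \eta_X(\theta,r,\varepsilon)\varepsilon/2,\ \varepsilon/4,\ \eta_Y(a,r,\varepsilon/4)\}, & a\in Y.\end{cases}\]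
   Context: For a geodesic space $W$ (metric space in which any two points are joined by a distance-preserving path from an interval, whose image is a geodesic segment), a modulus of weak uniform convexity is a map $\eta:W\times(0,\infty)\times(0,2]\to(0,1]$ such that for all $a\in W$, $r>0$, $\varepsilon\in(0,2]$, all $x,y\in W$ and every geodesic segment $[x,y]$ with midpoint $m(x,y)$: if $d(a,x)\le r$, $d(a,y)\le r$ and $d(x,y)\ge\varepsilon r$, then $d(a,m(x,y))\le(1-\eta(a,r,\varepsilon))r$. $W$ is weakly uniformly convex if it admits such a modulus. A modulus is monotone if it is nonincreasing in its second argument. The gluing $X\sqcup_\theta Y$ is the quotient of the disjoint union $X\sqcup Y$ by the identification $\theta\sim\tau$, with $X$ and $Y$ identified with their images, equipped with the metric $d(x,y)=d_X(x,y)$ if $x,y\in X$, $d(x,y)=d_Y(x,y)$ if $x,y\in Y$, and $d(x,y)=d_X(x,\theta)+d_Y(\tau,y)$ if $x\in X$, $y\in Y$. *)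

theory Defs
  imports "HOL-Analysis.Analysis"
begin

definition geodesic_path :: "'a set \<Rightarrow> ('a \<Rightarrow> 'a \<Rightarrow> real) \<Rightarrow> 'a \<Rightarrow> 'a \<Rightarrow> (real \<Rightarrow> 'a) \<Rightarrow> bool" where
  "geodesic_path M d x y g \<longleftrightarrow>
     g \<in> {0..d x y} \<rightarrow> M \<and> g 0 = x \<and> g (d x y) = y \<and>
     (\<forall>s\<in>{0..d x y}. \<forall>t\<in>{0..d x y}. d (g s) (g t) = \<bar>s - t\<bar>)"

definition geodesic_space :: "'a set \<Rightarrow> ('a \<Rightarrow> 'a \<Rightarrow> real) \<Rightarrow> bool" where
  "geodesic_space M d \<longleftrightarrow> Metric_space M d \<and>
     (\<forall>x\<in>M. \<forall>y\<in>M. \<exists>g. geodesic_path M d x y g)"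

definition modulus_wuc :: "'a set \<Rightarrow> ('a \<Rightarrow> 'a \<Rightarrow> real) \<Rightarrow> ('a \<Rightarrow> real \<Rightarrow> real \<Rightarrow> real) \<Rightarrow> bool" where
  "modulus_wuc M d \<eta> \<longleftrightarrow>
     (\<forall>a\<in>M. \<forall>r>0. \<forall>\<epsilon>. 0 < \<epsilon> \<and> \<epsilon> \<le> 2 \<longrightarrow> 0 < \<eta> a r \<epsilon> \<and> \<eta> a r \<epsilon> \<le> 1) \<and>
     (\<forall>a\<in>M. \<forall>r>0. \<forall>\<epsilon>. 0 < \<epsilon> \<and> \<epsilon> \<le> 2 \<longrightarrow>
        (\<forall>x\<in>M. \<forall>y\<in>M. \<forall>g. geodesic_path M d x y g \<and> d a x \<le> r \<and> d a y \<le> r \<and> d x y \<ge> \<epsilon> * r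
            \<longrightarrow> d a (g (d x y / 2)) \<le> (1 - \<eta> a r \<epsilon>) * r))"

definition weakly_uniformly_convex :: "'a set \<Rightarrow> ('a \<Rightarrow> 'a \<Rightarrow> real) \<Rightarrow> bool" where
  "weakly_uniformly_convex M d \<longleftrightarrow> (\<exists>\<eta>. modulus_wuc M d \<eta>)"

definition monotone_modulus_wuc :: "'a set \<Rightarrow> ('a \<Rightarrow> 'a \<Rightarrow> real) \<Rightarrow> ('a \<Rightarrow> real \<Rightarrow> real \<Rightarrow> real) \<Rightarrow> bool" where
  "monotone_modulus_wuc M d \<eta> \<longleftrightarrow> modulus_wuc M d \<eta> \<and>
     (\<forall>a\<in>M. \<forall>\<epsilon>. 0 < \<epsilon> \<and> \<epsilon> \<le> 2 \<longrightarrow> (\<forall>r1 r2. 0 < r1 \<and> r1 \<le> r2 \<longrightarrow> \<eta> a r2 \<epsilon> \<le> \<eta> a r1 \<epsilon>))"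

text \<open>Gluing X and Y along theta ~ tau, modelled in the sum type: the glued point is Inl theta,
  the remaining points of Y are Inr y for y \<noteq> tau.\<close>
definition glue_carrier :: "'a set \<Rightarrow> 'b set \<Rightarrow> 'b \<Rightarrow> ('a + 'b) set" where
  "glue_carrier X Y \<tau> = Inl ` X \<union> Inr ` (Y - {\<tau>})"

fun glue_dist :: "('a \<Rightarrow> 'a \<Rightarrow> real) \<Rightarrow> ('b \<Rightarrow> 'b \<Rightarrow> real) \<Rightarrow> 'a \<Rightarrow> 'b \<Rightarrow> ('a + 'b) \<Rightarrow> ('a + 'b) \<Rightarrow> real" where
  "glue_dist dX dY \<theta> \<tau> (Inl x) (Inl x') = dX x x'"
| "glue_dist dX dY \<theta> \<tau> (Inr y) (Inr y') = dY y y'"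
| "glue_dist dX dY \<theta> \<tau> (Inl x) (Inr y) = dX x \<theta> + dY \<tau> y"
| "glue_dist dX dY \<theta> \<tau> (Inr y) (Inl x) = dY y \<tau> + dX \<theta> x"

text \<open>The modulus from the statement; the glued point Inl theta is treated as a point of X.\<close>
fun glue_modulus :: "('a \<Rightarrow> real \<Rightarrow> real \<Rightarrow> real) \<Rightarrow> ('b \<Rightarrow> real \<Rightarrow> real \<Rightarrow> real) \<Rightarrow> 'a \<Rightarrow> 'b
     \<Rightarrow> ('a + 'b) \<Rightarrow> real \<Rightarrow> real \<Rightarrow> real" where
  "glue_modulus \<eta>X \<eta>Y \<theta> \<tau> (Inl a) r \<epsilon> =
     Min {\<eta>X a r \<epsilon>, \<eta>Y \<tau> r \<epsilon> * \<epsilon> / 2, \<epsilon> / 4, \<eta>X a r (\<epsilon> / 4)}"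
| "glue_modulus \<eta>X \<eta>Y \<theta> \<tau> (Inr a) r \<epsilon> =
     Min {\<eta>Y a r \<epsilon>, \<eta>X \<theta> r \<epsilon> * \<epsilon> / 2, \<epsilon> / 4, \<eta>Y a r (\<epsilon> / 4)}"

end

theory Submission
  imports Defs
begin


lemma mid_sub:
  assumes mod: "modulus_wuc M d \<eta>" and aM: "a \<in> M"
    and hM: "\<forall>t\<in>{lo..hi}. h t \<in> M"
    and hd: "\<forall>s\<in>{lo..hi}. \<forall>t\<in>{lo..hi}. d (h s) (h t) = \<bar>s - t\<bar>"
    and st: "lo \<le> s" "s < t" "t \<le> hi"
    and as: "d a (h s) \<le> r" and at: "d a (h t) \<le> r"
    and len: "t - s \<ge> e * r" and r: "r > 0" and e: "0 < e" "e \<le> 2"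
  shows "d a (h ((s + t) / 2)) \<le> (1 - \<eta> a r e) * r"
proof -
  define k where "k u = h (s + u)" for u
  have dst: "d (h s) (h t) = t - s" using hd st by auto
  have geo: "geodesic_path M d (h s) (h t) k"
    unfolding geodesic_path_def dst
  proof (intro conjI)
    show "k \<in> {0..t - s} \<rightarrow> M" using hM st by (auto simp: k_def)
    show "k 0 = h s" by (simp add: k_def)
    show "k (t - s) = h t" by (simp add: k_def)
    show "\<forall>u\<in>{0..t - s}. \<forall>v\<in>{0..t - s}. d (k u) (k v) = \<bar>u - v\<bar>"
      using hd st by (auto simp: k_def)
  qed
  have "h s \<in> M" "h t \<in> M" using hM st by auto
  then have "d a (k (d (h s) (h t) / 2)) \<le> (1 - \<eta> a r e) * r"
    using mod aM r e geo as at len dst unfolding modulus_wuc_def by (metis (no_types, lifting))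
  moreover have "k (d (h s) (h t) / 2) = h ((s + t) / 2)"
    by (simp add: k_def dst field_simps)
  ultimately show ?thesis by simp
qed

lemma ball_convex:
  assumes ms: "Metric_space M d" and mod: "modulus_wuc M d \<eta>" and aM: "a \<in> M"
    and hM: "\<forall>t\<in>{lo..hi}. h t \<in> M"
    and hd: "\<forall>s\<in>{lo..hi}. \<forall>t\<in>{lo..hi}. d (h s) (h t) = \<bar>s - t\<bar>"
    and lh: "lo \<le> hi" and R1: "d a (h lo) \<le> R" and R2: "d a (h hi) \<le> R"
    and u: "u \<in> {lo..hi}"
  shows "d a (h u) \<le> R"
proof (rule ccontr)
  interpret Metric_space M d by (rule ms)
  assume neg: "\<not> ?thesis"
  define f where "f t = d a (h t)" for t
  have lip: "1-lipschitz_on {lo..hi} f"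
  proof (rule lipschitz_onI)
    fix s t assume s: "s \<in> {lo..hi}" and t: "t \<in> {lo..hi}"
    have "d a (h s) \<le> d a (h t) + d (h t) (h s)" "d a (h t) \<le> d a (h s) + d (h s) (h t)"
      using triangle aM hM s t by auto
    then show "dist (f s) (f t) \<le> 1 * dist s t"
      using hd s t commute by (auto simp: f_def dist_real_def)
  qed simp
  have cont: "continuous_on {lo..hi} f" by (rule lipschitz_on_continuous_on[OF lip])
  obtain t1 where t1: "t1 \<in> {lo..hi}" and mx: "\<forall>t\<in>{lo..hi}. f t \<le> f t1"
    using continuous_attains_sup[OF compact_Icc _ cont] lh by auto
  have big: "f t1 > R" using mx u neg by (force simp: f_def)
  have "R \<ge> 0" using R1 nonneg[of a "h lo"] by linarith
  then have fpos: "f t1 > 0" using big by linarith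
  have "t1 \<noteq> lo" "t1 \<noteq> hi" using big R1 R2 by (auto simp: f_def)
  then have lt: "lo < t1" "t1 < hi" using t1 by auto
  define hh where "hh = min (t1 - lo) (hi - t1)"
  have hh: "hh > 0" "lo \<le> t1 - hh" "t1 + hh \<le> hi" using lt by (auto simp: hh_def)
  have m1: "f (t1 - hh) \<le> f t1" "f (t1 + hh) \<le> f t1" using mx hh lt by auto
  have "d (h (t1 - hh)) (h (t1 + hh)) = 2 * hh" using hd hh lt by auto
  moreover have "d (h (t1 - hh)) (h (t1 + hh)) \<le> d (h (t1 - hh)) a + d a (h (t1 + hh))"
    using triangle aM hM hh lt by auto
  ultimately have "2 * hh \<le> 2 * f t1" using m1 commute by (simp add: f_def)
  then have e2: "2 * hh / f t1 \<le> 2" using fpos by (simp add: divide_le_eq)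
  have "d a (h (((t1 - hh) + (t1 + hh)) / 2)) \<le> (1 - \<eta> a (f t1) (2 * hh / f t1)) * f t1"
    apply (rule mid_sub[OF mod aM hM hd])
    using hh m1 fpos e2 by (auto simp: f_def)
  moreover have "\<eta> a (f t1) (2 * hh / f t1) > 0"
    using mod aM fpos e2 hh unfolding modulus_wuc_def by auto
  ultimately have "f t1 < f t1" using fpos mult_pos_pos by (fastforce simp: f_def algebra_simps)
  then show False by simp
qed

lemma geo_rev:
  assumes "geodesic_path M d x y g" and "\<And>u v. d u v = d v u"
  shows "geodesic_path M d y x (\<lambda>t. g (d x y - t))"
  using assms unfolding geodesic_path_def
  by (auto simp: Pi_def)

lemma weaken_eta:
  fixes dd e m r :: real
  assumes "dd \<le> (1 - e) * r" "m \<le> e" "r > 0"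
  shows "dd \<le> (1 - m) * r"
proof -
  have "(e - m) * r \<ge> 0" using assms by simp
  then show ?thesis using assms(1) by (simp add: algebra_simps)
qed

lemma x_key:
  assumes ms: "Metric_space X dX" and mod: "modulus_wuc X dX \<eta>X" and aX: "a \<in> X"
    and geo: "geodesic_path X dX x' \<theta> h" and p: "p = dX x' \<theta>"
    and ax: "dX a x' \<le> r" and ath: "dX a \<theta> \<le> r - q" and q: "0 \<le> q" "q < p"
    and len: "p + q \<ge> \<epsilon> * r" and r: "r > 0" and e: "0 < \<epsilon>" "\<epsilon> \<le> 2"
  shows "dX a (h ((p + q) / 2)) \<le> (1 - min (\<eta>X a r (\<epsilon>/4)) (\<epsilon>/4)) * r"
proof -
  have hM: "\<forall>t\<in>{0..p}. h t \<in> X" and hd: "\<forall>s\<in>{0..p}. \<forall>t\<in>{0..p}. dX (h s) (h t) = \<bar>s - t\<bar>"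
    and h0: "h 0 = x'" and hp: "h p = \<theta>"
    using geo p unfolding geodesic_path_def by auto
  have e4: "0 < \<epsilon>/4" "\<epsilon>/4 \<le> 2" using e by auto
  show ?thesis
  proof (cases "q \<ge> \<epsilon> * r / 4")
    case True
    have m1: "dX a (h ((0 + p) / 2)) \<le> (1 - \<eta>X a r (\<epsilon>/4)) * r"
    proof (rule mid_sub[OF mod aX hM hd _ _ _ _ _ _ r e4])
      show "dX a (h 0) \<le> r" using ax h0 by simp
      show "dX a (h p) \<le> r" using ath hp q by simp
      show "\<epsilon> / 4 * r \<le> p - 0" using True q by simp
    qed (use q in auto)
    have hM': "\<forall>t\<in>{p/2..p}. h t \<in> X" and hd': "\<forall>s\<in>{p/2..p}. \<forall>t\<in>{p/2..p}. dX (h s) (h t) = \<bar>s - t\<bar>"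
      using hM hd q by auto
    have c1: "dX a (h (p/2)) \<le> (1 - min (\<eta>X a r (\<epsilon>/4)) (\<epsilon>/4)) * r"
      by (rule weaken_eta[where e="\<eta>X a r (\<epsilon>/4)", OF _ _ r]) (use m1 in auto)
    have c2: "dX a (h p) \<le> (1 - min (\<eta>X a r (\<epsilon>/4)) (\<epsilon>/4)) * r"
      by (rule weaken_eta[where e="\<epsilon>/4", OF _ _ r]) (use ath hp True in \<open>auto simp: algebra_simps\<close>)
    show ?thesis
      by (rule ball_convex[OF ms mod aX hM' hd' _ c1 c2]) (use q in auto)
    next
    case False
    have u: "dX a (h q) \<le> r"
      by (rule ball_convex[OF ms mod aX hM hd]) (use q ax ath h0 hp in simp_all)
    have c3: "dX a (h ((q + p) / 2)) \<le> (1 - \<eta>X a r (\<epsilon>/4)) * r"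
    proof (rule mid_sub[OF mod aX hM hd _ _ _ u _ _ r e4])
      show "dX a (h p) \<le> r" using ath hp q by simp
      show "\<epsilon> / 4 * r \<le> p - q" using False len mult_pos_pos[OF e(1) r] by simp
    qed (use q in auto)
    show ?thesis by (rule weaken_eta[where e="\<eta>X a r (\<epsilon>/4)", OF _ _ r]) (use c3 in \<open>auto simp: add.commute\<close>)
  qed
qed



lemma geo_facts:
  assumes "geodesic_path M d x y g"
  shows "\<forall>t\<in>{0..d x y}. g t \<in> M" "g 0 = x" "g (d x y) = y"
    "\<forall>s\<in>{0..d x y}. \<forall>t\<in>{0..d x y}. d (g s) (g t) = \<bar>s - t\<bar>"
  using assms unfolding geodesic_path_def by auto

lemma glue_commute:
  assumes "Metric_space X dX" "Metric_space Y dY"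
  shows "glue_dist dX dY \<theta> \<tau> u v = glue_dist dX dY \<theta> \<tau> v u"
  using Metric_space.commute[OF assms(1)] Metric_space.commute[OF assms(2)]
  by (cases u; cases v) auto

lemma glue_mem: "u \<in> glue_carrier X Y \<tau> \<Longrightarrow> (\<exists>z\<in>X. u = Inl z) \<or> (\<exists>w\<in>Y. w \<noteq> \<tau> \<and> u = Inr w)"
  unfolding glue_carrier_def by auto

lemma case_LL:
  assumes msX: "Metric_space X dX" and msY: "Metric_space Y dY" and th: "\<theta> \<in> X" and ta: "\<tau> \<in> Y"
    and modX: "modulus_wuc X dX \<eta>X" and aX: "a \<in> X" and xX: "x' \<in> X" and yX: "y' \<in> X"
    and geo: "geodesic_path (glue_carrier X Y \<tau>) (glue_dist dX dY \<theta> \<tau>) (Inl x') (Inl y') g"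
    and ax: "dX a x' \<le> r" and ay: "dX a y' \<le> r" and len: "dX x' y' \<ge> \<epsilon> * r"
    and r: "r > 0" and e: "0 < \<epsilon>" "\<epsilon> \<le> 2"
  shows "glue_dist dX dY \<theta> \<tau> (Inl a) (g (dX x' y' / 2)) \<le> (1 - \<eta>X a r \<epsilon>) * r"
proof -
  interpret X: Metric_space X dX by (rule msX)
  interpret Y: Metric_space Y dY by (rule msY)
  define D where "D = dX x' y'"
  note gf = geo_facts[OF geo, simplified, folded D_def]
  have inl: "\<exists>z\<in>X. g t = Inl z" if t: "t \<in> {0..D}" for t
  proof -
    have "(\<exists>z\<in>X. g t = Inl z) \<or> (\<exists>w\<in>Y. w \<noteq> \<tau> \<and> g t = Inr w)"
      using glue_mem[of "g t" X Y \<tau>] gf(1) t by blast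
    moreover have False if w: "w \<in> Y" "w \<noteq> \<tau>" "g t = Inr w" for w
    proof -
      have D0: "0 \<le> D" by (simp add: D_def)
      have "glue_dist dX dY \<theta> \<tau> (g 0) (g t) = \<bar>0 - t\<bar>" "glue_dist dX dY \<theta> \<tau> (g t) (g D) = \<bar>t - D\<bar>"
        using gf(4)[rule_format, of 0 t] gf(4)[rule_format, of t D] t D0 by auto
      then have 1: "dX x' \<theta> + dY \<tau> w = t" "dY w \<tau> + dX \<theta> y' = D - t"
        using gf(2,3) w(3) t by auto
      have "dX x' y' \<le> dX x' \<theta> + dX \<theta> y'" using X.triangle[OF xX th yX] .
      moreover have "dY \<tau> w \<noteq> 0" using w ta by simp
      then have "dY \<tau> w > 0" using Y.nonneg[of \<tau> w] by linarith
      ultimately show False using 1 Y.commute[of w \<tau>] by (simp add: D_def)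
    qed
    ultimately show ?thesis by blast
  qed
  define h where "h t = (case g t of Inl z \<Rightarrow> z | Inr _ \<Rightarrow> \<theta>)" for t
  have gh: "g t = Inl (h t) \<and> h t \<in> X" if "t \<in> {0..D}" for t
    using inl[OF that] by (auto simp: h_def)
  have geoX: "geodesic_path X dX x' y' h"
    unfolding geodesic_path_def
  proof (intro conjI)
    show "h \<in> {0..dX x' y'} \<rightarrow> X" using gh by (auto simp: D_def)
    show "h 0 = x'" using gf(2) by (simp add: h_def)
    show "h (dX x' y') = y'" using gf(3) by (simp add: h_def D_def)
    show "\<forall>s\<in>{0..dX x' y'}. \<forall>t\<in>{0..dX x' y'}. dX (h s) (h t) = \<bar>s - t\<bar>"
    proof (intro ballI)
      fix s t assume s: "s \<in> {0..dX x' y'}" and t: "t \<in> {0..dX x' y'}"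
      have "glue_dist dX dY \<theta> \<tau> (g s) (g t) = \<bar>s - t\<bar>" using gf(4)[rule_format, of s t] s t by (simp add: D_def)
      then show "dX (h s) (h t) = \<bar>s - t\<bar>" using gh[of s] gh[of t] s t by (simp add: D_def)
    qed
  qed
  have "dX a (h (dX x' y' / 2)) \<le> (1 - \<eta>X a r \<epsilon>) * r"
    using modX aX r e xX yX geoX ax ay len unfolding modulus_wuc_def by (metis (no_types, lifting))
  moreover have "D / 2 \<in> {0..D}" by (simp add: D_def)
  ultimately show ?thesis using gh[of "D/2"] by (simp add: D_def)
qed



lemma case_RR:
  assumes msX: "Metric_space X dX" and msY: "Metric_space Y dY" and th: "\<theta> \<in> X" and ta: "\<tau> \<in> Y"
    and modY: "monotone_modulus_wuc Y dY \<eta>Y" and aX: "a \<in> X"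
    and xY: "x' \<in> Y" "x' \<noteq> \<tau>" and yY: "y' \<in> Y" "y' \<noteq> \<tau>"
    and geo: "geodesic_path (glue_carrier X Y \<tau>) (glue_dist dX dY \<theta> \<tau>) (Inr x') (Inr y') g"
    and ax: "dX a \<theta> + dY \<tau> x' \<le> r" and ay: "dX a \<theta> + dY \<tau> y' \<le> r" and len: "dY x' y' \<ge> \<epsilon> * r"
    and r: "r > 0" and e: "0 < \<epsilon>" "\<epsilon> \<le> 2"
  shows "glue_dist dX dY \<theta> \<tau> (Inl a) (g (dY x' y' / 2)) \<le> (1 - \<eta>Y \<tau> r \<epsilon> * \<epsilon> / 2) * r"
proof -
  interpret X: Metric_space X dX by (rule msX)
  interpret Y: Metric_space Y dY by (rule msY)
  define D where "D = dY x' y'"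
  have D0: "0 \<le> D" by (simp add: D_def)
  note gf = geo_facts[OF geo, simplified, folded D_def]
  define h where "h t = (case g t of Inl z \<Rightarrow> \<tau> | Inr w \<Rightarrow> w)" for t
  have cl: "(g t = Inl \<theta> \<and> h t = \<tau>) \<or> (g t = Inr (h t) \<and> h t \<in> Y \<and> h t \<noteq> \<tau>)" if t: "t \<in> {0..D}" for t
  proof -
    have "(\<exists>z\<in>X. g t = Inl z) \<or> (\<exists>w\<in>Y. w \<noteq> \<tau> \<and> g t = Inr w)"
      using glue_mem[of "g t" X Y \<tau>] gf(1) t by blast
    moreover have "z = \<theta>" if z: "z \<in> X" "g t = Inl z" for z
    proof -
      have "glue_dist dX dY \<theta> \<tau> (g 0) (g t) = \<bar>0 - t\<bar>" "glue_dist dX dY \<theta> \<tau> (g t) (g D) = \<bar>t - D\<bar>"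
        using gf(4)[rule_format, of 0 t] gf(4)[rule_format, of t D] t D0 by auto
      then have 1: "dY x' \<tau> + dX \<theta> z = t" "dX z \<theta> + dY \<tau> y' = D - t"
        using gf(2,3) z(2) t by auto
      have "dY x' y' \<le> dY x' \<tau> + dY \<tau> y'" using Y.triangle[OF xY(1) ta yY(1)] .
      then have "dX \<theta> z \<le> 0" using 1 X.commute[of z \<theta>] by (simp add: D_def)
      then have "dX \<theta> z = 0" using X.nonneg[of \<theta> z] by linarith
      then show "z = \<theta>" using z th by simp
    qed
    ultimately show ?thesis by (auto simp: h_def)
  qed
  have hY: "h t \<in> Y" if "t \<in> {0..D}" for t using cl[OF that] ta by auto
  have hd: "dY (h s) (h t) = glue_dist dX dY \<theta> \<tau> (g s) (g t)" if "s \<in> {0..D}" "t \<in> {0..D}" for s t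
    using cl[OF that(1)] cl[OF that(2)] th ta by auto
  have ha: "glue_dist dX dY \<theta> \<tau> (Inl a) (g t) = dX a \<theta> + dY \<tau> (h t)" if "t \<in> {0..D}" for t
    using cl[OF that] ta by auto
  have geoY: "geodesic_path Y dY x' y' h"
    unfolding geodesic_path_def
  proof (intro conjI)
    show "h \<in> {0..dY x' y'} \<rightarrow> Y" using hY by (auto simp: D_def)
    show "h 0 = x'" using gf(2) by (simp add: h_def)
    show "h (dY x' y') = y'" using gf(3) by (simp add: h_def D_def)
    show "\<forall>s\<in>{0..dY x' y'}. \<forall>t\<in>{0..dY x' y'}. dY (h s) (h t) = \<bar>s - t\<bar>"
      using hd gf(4) by (simp add: D_def)
  qed
  define \<rho> where "\<rho> = r - dX a \<theta>"
  have "D \<le> dY x' \<tau> + dY \<tau> y'" using Y.triangle[OF xY(1) ta yY(1)] by (simp add: D_def)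
  then have D2: "D \<le> 2 * \<rho>" using ax ay Y.commute[of x' \<tau>] by (simp add: \<rho>_def)
  have er: "\<epsilon> * r > 0" using e r by simp
  have rho: "\<rho> \<ge> \<epsilon> * r / 2" using D2 len by (simp add: D_def)
  then have rho0: "\<rho> > 0" using er by linarith
  have rhor: "\<rho> \<le> r" using X.nonneg[of a \<theta>] by (simp add: \<rho>_def)
  have "\<epsilon> * \<rho> \<le> \<epsilon> * r" using rhor e by simp
  then have len2: "dY x' y' \<ge> \<epsilon> * \<rho>" using len by linarith
  have modY': "modulus_wuc Y dY \<eta>Y" using modY unfolding monotone_modulus_wuc_def by simp
  have m: "dY \<tau> (h (dY x' y' / 2)) \<le> (1 - \<eta>Y \<tau> \<rho> \<epsilon>) * \<rho>"
    using modY' ta rho0 e xY(1) yY(1) geoY ax ay len2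
    unfolding modulus_wuc_def \<rho>_def by (metis (no_types, lifting) add.commute le_diff_eq)
  have mono: "\<eta>Y \<tau> r \<epsilon> \<le> \<eta>Y \<tau> \<rho> \<epsilon>"
    using modY ta e rho0 rhor unfolding monotone_modulus_wuc_def by blast
  have eta0: "\<eta>Y \<tau> r \<epsilon> \<ge> 0" using modY' ta r e unfolding modulus_wuc_def by force
  have "(1 - \<eta>Y \<tau> \<rho> \<epsilon>) * \<rho> \<le> (1 - \<eta>Y \<tau> r \<epsilon>) * \<rho>"
    using mono rho0 by (intro mult_right_mono) auto
  moreover have "\<eta>Y \<tau> r \<epsilon> * (\<epsilon> * r / 2) \<le> \<eta>Y \<tau> r \<epsilon> * \<rho>"
    using rho eta0 by (intro mult_left_mono) auto
  ultimately have "dY \<tau> (h (dY x' y' / 2)) \<le> \<rho> - \<eta>Y \<tau> r \<epsilon> * \<epsilon> / 2 * r"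
    using m by (simp add: algebra_simps)
  moreover have "D / 2 \<in> {0..D}" using D0 by simp
  ultimately show ?thesis using ha[of "D/2"] by (simp add: D_def \<rho>_def algebra_simps)
qed



lemma case_LR:
  assumes msX: "Metric_space X dX" and msY: "Metric_space Y dY" and th: "\<theta> \<in> X" and ta: "\<tau> \<in> Y"
    and modX: "modulus_wuc X dX \<eta>X" and aX: "a \<in> X"
    and xX: "x' \<in> X" and yY: "y' \<in> Y" "y' \<noteq> \<tau>"
    and geo: "geodesic_path (glue_carrier X Y \<tau>) (glue_dist dX dY \<theta> \<tau>) (Inl x') (Inr y') g"
    and ax: "dX a x' \<le> r" and ay: "dX a \<theta> + dY \<tau> y' \<le> r" and len: "dX x' \<theta> + dY \<tau> y' \<ge> \<epsilon> * r"
    and r: "r > 0" and e: "0 < \<epsilon>" "\<epsilon> \<le> 2"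
  shows "glue_dist dX dY \<theta> \<tau> (Inl a) (g ((dX x' \<theta> + dY \<tau> y') / 2))
           \<le> (1 - min (\<eta>X a r (\<epsilon>/4)) (\<epsilon>/4)) * r"
proof -
  interpret X: Metric_space X dX by (rule msX)
  interpret Y: Metric_space Y dY by (rule msY)
  define p where "p = dX x' \<theta>"
  define q where "q = dY \<tau> y'"
  define D where "D = p + q"
  have dxy: "glue_dist dX dY \<theta> \<tau> (Inl x') (Inr y') = D" by (simp add: D_def p_def q_def)
  note gf = geo_facts[OF geo, unfolded dxy]
  have p0: "0 \<le> p" by (simp add: p_def)
  have "q \<noteq> 0" using yY ta by (simp add: q_def)
  then have q0: "q > 0" using Y.nonneg[of \<tau> y'] unfolding q_def by linarith
  have D0: "0 \<le> D" using p0 q0 by (simp add: D_def)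
  have d0t: "glue_dist dX dY \<theta> \<tau> (Inl x') (g t) = t" if t: "t \<in> {0..D}" for t
    using gf(4)[rule_format, of 0 t] gf(2) t D0 by auto
  have dtD: "glue_dist dX dY \<theta> \<tau> (g t) (Inr y') = D - t" if t: "t \<in> {0..D}" for t
    using gf(4)[rule_format, of t D] gf(3) t D0 by auto
  have mem: "(\<exists>z\<in>X. g t = Inl z) \<or> (\<exists>w\<in>Y. w \<noteq> \<tau> \<and> g t = Inr w)" if t: "t \<in> {0..D}" for t
    using glue_mem[of "g t" X Y \<tau>] gf(1) t by blast
  have er: "\<epsilon> * r > 0" using e r by simp
  show ?thesis
  proof (cases "p \<le> q")
    case True
    have Dm: "D/2 \<in> {0..D}" using D0 by simp
    have "glue_dist dX dY \<theta> \<tau> (Inl a) (g (D/2)) \<le> r - D/2"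
    proof -
      { fix z assume z: "z \<in> X" "g (D/2) = Inl z"
        have "dX z \<theta> + q = D - D/2" using dtD[OF Dm] z(2) by (simp add: q_def)
        then have "dX z \<theta> \<le> 0" using True by (simp add: D_def)
        then have "dX z \<theta> = 0" using X.nonneg[of z \<theta>] by linarith
        then have "z = \<theta>" using z th by simp
        moreover have "D/2 \<le> q" using True by (simp add: D_def)
        ultimately have ?thesis using z ay unfolding q_def by simp }
      moreover
      { fix w assume w: "w \<in> Y" "w \<noteq> \<tau>" "g (D/2) = Inr w"
        have "p + dY \<tau> w = D/2" using d0t[OF Dm] w(3) by (simp add: p_def)
        then have "dX a \<theta> + dY \<tau> w = (dX a \<theta> + q) - D/2" by (simp add: D_def field_simps)
        moreover have "dX a \<theta> + q \<le> r" using ay by (simp add: q_def)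
        ultimately have ?thesis using w by simp }
      ultimately show ?thesis using mem[OF Dm] by blast
    qed
    moreover have "r - D/2 \<le> (1 - \<epsilon>/4) * r" using len er by (simp add: D_def p_def q_def algebra_simps)
    ultimately have c: "glue_dist dX dY \<theta> \<tau> (Inl a) (g (D/2)) \<le> (1 - \<epsilon>/4) * r" by linarith
    have DD: "D = dX x' \<theta> + dY \<tau> y'" by (simp add: D_def p_def q_def)
    show ?thesis using weaken_eta[OF c _ r, of "min (\<eta>X a r (\<epsilon>/4)) (\<epsilon>/4)"] DD by simp
  next
    case False
    have inl: "\<exists>z\<in>X. g t = Inl z" if t: "t \<in> {0..p}" for t
    proof -
      have tD: "t \<in> {0..D}" using t q0 by (auto simp: D_def)
      moreover have False if w: "w \<in> Y" "w \<noteq> \<tau>" "g t = Inr w" for w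
      proof -
        have "p + dY \<tau> w = t" using d0t[OF tD] w(3) by (simp add: p_def)
        moreover have "dY \<tau> w \<noteq> 0" using w ta by simp
        then have "dY \<tau> w > 0" using Y.nonneg[of \<tau> w] by linarith
        ultimately show False using t by simp
      qed
      ultimately show ?thesis using mem by blast
    qed
    define h where "h t = (case g t of Inl z \<Rightarrow> z | Inr _ \<Rightarrow> \<theta>)" for t
    have gh: "g t = Inl (h t) \<and> h t \<in> X" if "t \<in> {0..p}" for t
      using inl[OF that] by (auto simp: h_def)
    have pD: "p \<in> {0..D}" using p0 q0 by (simp add: D_def)
    have "dX (h p) \<theta> + q = q" using dtD[OF pD] gh[of p] p0 by (simp add: D_def q_def)
    then have "dX (h p) \<theta> = 0" by simp
    then have hp: "h p = \<theta>" using gh[of p] p0 th by simp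
    have geoX: "geodesic_path X dX x' \<theta> h"
      unfolding geodesic_path_def p_def[symmetric]
    proof (intro conjI)
      show "h \<in> {0..p} \<rightarrow> X" using gh by auto
      show "h 0 = x'" using gf(2) by (simp add: h_def)
      show "h p = \<theta>" by (rule hp)
      show "\<forall>s\<in>{0..p}. \<forall>t\<in>{0..p}. dX (h s) (h t) = \<bar>s - t\<bar>"
      proof (intro ballI)
        fix s t assume s: "s \<in> {0..p}" and t: "t \<in> {0..p}"
        have "s \<in> {0..D}" "t \<in> {0..D}" using s t q0 by (auto simp: D_def)
        then have "glue_dist dX dY \<theta> \<tau> (g s) (g t) = \<bar>s - t\<bar>" using gf(4) by blast
        then show "dX (h s) (h t) = \<bar>s - t\<bar>" using gh[OF s] gh[OF t] by simp
      qed
    qed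
    have "dX a (h ((p + q) / 2)) \<le> (1 - min (\<eta>X a r (\<epsilon>/4)) (\<epsilon>/4)) * r"
    proof (rule x_key[OF msX modX aX geoX p_def ax _ _ _ _ r e])
      show "dX a \<theta> \<le> r - q" using ay by (simp add: q_def)
      show "0 \<le> q" using q0 by simp
      show "q < p" using False by simp
      show "\<epsilon> * r \<le> p + q" using len by (simp add: p_def q_def)
    qed
    moreover have "(p + q) / 2 \<in> {0..p}" using False q0 by auto
    ultimately show ?thesis using gh[of "(p+q)/2"] by (simp add: p_def q_def)
  qed
qed



lemma Min4: "Min {a, b, c, d::real} = min a (min b (min c d))"
  by (simp add: min.assoc)

lemma Min4_le: fixes a b c d :: real
  shows "Min {a, b, c, d} \<le> a" "Min {a, b, c, d} \<le> b" "Min {a, b, c, d} \<le> c" "Min {a, b, c, d} \<le> d"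
  by (simp_all add: Min4)

lemma main_inl:
  assumes msX: "Metric_space X dX" and msY: "Metric_space Y dY" and th: "\<theta> \<in> X" and ta: "\<tau> \<in> Y"
    and modX: "modulus_wuc X dX \<eta>X" and monoY: "monotone_modulus_wuc Y dY \<eta>Y" and aX: "a \<in> X"
    and x: "x \<in> glue_carrier X Y \<tau>" and y: "y \<in> glue_carrier X Y \<tau>"
    and geo: "geodesic_path (glue_carrier X Y \<tau>) (glue_dist dX dY \<theta> \<tau>) x y g"
    and ax: "glue_dist dX dY \<theta> \<tau> (Inl a) x \<le> r" and ay: "glue_dist dX dY \<theta> \<tau> (Inl a) y \<le> r"
    and len: "glue_dist dX dY \<theta> \<tau> x y \<ge> \<epsilon> * r"
    and r: "r > 0" and e: "0 < \<epsilon>" "\<epsilon> \<le> 2"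
  shows "glue_dist dX dY \<theta> \<tau> (Inl a) (g (glue_dist dX dY \<theta> \<tau> x y / 2))
           \<le> (1 - glue_modulus \<eta>X \<eta>Y \<theta> \<tau> (Inl a) r \<epsilon>) * r"
proof -
  interpret X: Metric_space X dX by (rule msX)
  interpret Y: Metric_space Y dY by (rule msY)
  define GM where "GM = glue_modulus \<eta>X \<eta>Y \<theta> \<tau> (Inl a) r \<epsilon>"
  have GM: "GM \<le> \<eta>X a r \<epsilon>" "GM \<le> \<eta>Y \<tau> r \<epsilon> * \<epsilon> / 2" "GM \<le> min (\<eta>X a r (\<epsilon>/4)) (\<epsilon>/4)"
  proof -
    have "GM \<le> \<eta>X a r (\<epsilon>/4)" "GM \<le> \<epsilon>/4" unfolding GM_def glue_modulus.simps by (rule Min4_le)+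
    then show "GM \<le> min (\<eta>X a r (\<epsilon>/4)) (\<epsilon>/4)" by simp
  qed (unfold GM_def glue_modulus.simps, (rule Min4_le)+)
  have main: "glue_dist dX dY \<theta> \<tau> (Inl a) (g (glue_dist dX dY \<theta> \<tau> x y / 2)) \<le> (1 - GM) * r"
  proof (cases x)
    case (Inl x')
    then have xX: "x' \<in> X" using x unfolding glue_carrier_def by auto
    show ?thesis
    proof (cases y)
      case (Inl y')
      then have yX: "y' \<in> X" using y unfolding glue_carrier_def by auto
      have "glue_dist dX dY \<theta> \<tau> (Inl a) (g (dX x' y' / 2)) \<le> (1 - \<eta>X a r \<epsilon>) * r"
        by (rule case_LL[OF msX msY th ta modX aX xX yX])
           (use geo ax ay len r e \<open>x = Inl x'\<close> \<open>y = Inl y'\<close> in auto)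
      then show ?thesis using weaken_eta[OF _ GM(1) r] \<open>x = Inl x'\<close> \<open>y = Inl y'\<close> by simp
    next
      case (Inr y')
      then have yY: "y' \<in> Y" "y' \<noteq> \<tau>" using y unfolding glue_carrier_def by auto
      have "glue_dist dX dY \<theta> \<tau> (Inl a) (g ((dX x' \<theta> + dY \<tau> y') / 2))
           \<le> (1 - min (\<eta>X a r (\<epsilon>/4)) (\<epsilon>/4)) * r"
        by (rule case_LR[OF msX msY th ta modX aX xX yY])
           (use geo ax ay len r e \<open>x = Inl x'\<close> \<open>y = Inr y'\<close> in auto)
      then show ?thesis using weaken_eta[OF _ GM(3) r] \<open>x = Inl x'\<close> \<open>y = Inr y'\<close> by simp
    qed
  next
    case (Inr x')
    then have xY: "x' \<in> Y" "x' \<noteq> \<tau>" using x unfolding glue_carrier_def by auto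
    show ?thesis
    proof (cases y)
      case (Inl y')
      then have yX: "y' \<in> X" using y unfolding glue_carrier_def by auto
      have com: "\<And>u v. glue_dist dX dY \<theta> \<tau> u v = glue_dist dX dY \<theta> \<tau> v u"
        by (rule glue_commute[OF msX msY])
      define D where "D = glue_dist dX dY \<theta> \<tau> x y"
      have geo': "geodesic_path (glue_carrier X Y \<tau>) (glue_dist dX dY \<theta> \<tau>) (Inl y') (Inr x') (\<lambda>t. g (D - t))"
        using geo_rev[OF geo com] \<open>x = Inr x'\<close> \<open>y = Inl y'\<close> by (simp add: D_def)
      have DD: "D = dX y' \<theta> + dY \<tau> x'"
        using \<open>x = Inr x'\<close> \<open>y = Inl y'\<close> X.commute[of y' \<theta>] Y.commute[of x' \<tau>] by (simp add: D_def)
      have c: "glue_dist dX dY \<theta> \<tau> (Inl a) (g (D - (dX y' \<theta> + dY \<tau> x') / 2))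
           \<le> (1 - min (\<eta>X a r (\<epsilon>/4)) (\<epsilon>/4)) * r"
      proof (rule case_LR[OF msX msY th ta modX aX yX xY geo' _ _ _ r e])
        show "dX a y' \<le> r" using ay \<open>y = Inl y'\<close> by simp
        show "dX a \<theta> + dY \<tau> x' \<le> r" using ax \<open>x = Inr x'\<close> by simp
        show "\<epsilon> * r \<le> dX y' \<theta> + dY \<tau> x'" using len DD by (simp add: D_def)
      qed
      have eq: "D - (dX y' \<theta> + dY \<tau> x') / 2 = D / 2" by (simp add: DD field_simps)
      have "glue_dist dX dY \<theta> \<tau> (Inl a) (g (D / 2)) \<le> (1 - min (\<eta>X a r (\<epsilon>/4)) (\<epsilon>/4)) * r"
        using c unfolding eq .
      then show ?thesis using weaken_eta[OF _ GM(3) r] by (simp add: D_def)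
    next
      case (Inr y')
      then have yY: "y' \<in> Y" "y' \<noteq> \<tau>" using y unfolding glue_carrier_def by auto
      have "glue_dist dX dY \<theta> \<tau> (Inl a) (g (dY x' y' / 2)) \<le> (1 - \<eta>Y \<tau> r \<epsilon> * \<epsilon> / 2) * r"
        by (rule case_RR[OF msX msY th ta monoY aX xY yY])
           (use geo ax ay len r e \<open>x = Inr x'\<close> \<open>y = Inr y'\<close> in auto)
      then show ?thesis using weaken_eta[OF _ GM(2) r] \<open>x = Inr x'\<close> \<open>y = Inr y'\<close> by simp
    qed
  qed
  then show ?thesis by (simp only: GM_def)
qed



definition sw :: "'a \<Rightarrow> 'b \<Rightarrow> 'a + 'b \<Rightarrow> 'b + 'a" where
  "sw \<theta> \<tau> u = (case u of Inl x \<Rightarrow> if x = \<theta> then Inl \<tau> else Inr x | Inr y \<Rightarrow> Inl y)"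

lemma sw_mem:
  assumes "u \<in> glue_carrier X Y \<tau>" "\<theta> \<in> X" "\<tau> \<in> Y"
  shows "sw \<theta> \<tau> u \<in> glue_carrier Y X \<theta>"
  using assms unfolding glue_carrier_def sw_def by auto

lemma sw_dist:
  assumes msX: "Metric_space X dX" and msY: "Metric_space Y dY" and th: "\<theta> \<in> X" and ta: "\<tau> \<in> Y"
    and u: "u \<in> glue_carrier X Y \<tau>" and v: "v \<in> glue_carrier X Y \<tau>"
  shows "glue_dist dY dX \<tau> \<theta> (sw \<theta> \<tau> u) (sw \<theta> \<tau> v) = glue_dist dX dY \<theta> \<tau> u v"
proof -
  interpret X: Metric_space X dX by (rule msX)
  interpret Y: Metric_space Y dY by (rule msY)
  have z: "dX \<theta> \<theta> = 0" "dY \<tau> \<tau> = 0" using th ta by auto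
  show ?thesis using glue_mem[OF u] glue_mem[OF v] z by (auto simp: sw_def)
qed

lemma sw_geo:
  assumes msX: "Metric_space X dX" and msY: "Metric_space Y dY" and th: "\<theta> \<in> X" and ta: "\<tau> \<in> Y"
    and x: "x \<in> glue_carrier X Y \<tau>" and y: "y \<in> glue_carrier X Y \<tau>"
    and geo: "geodesic_path (glue_carrier X Y \<tau>) (glue_dist dX dY \<theta> \<tau>) x y g"
  shows "geodesic_path (glue_carrier Y X \<theta>) (glue_dist dY dX \<tau> \<theta>) (sw \<theta> \<tau> x) (sw \<theta> \<tau> y) (\<lambda>t. sw \<theta> \<tau> (g t))"
proof -
  note gf = geo_facts[OF geo]
  have dd: "glue_dist dY dX \<tau> \<theta> (sw \<theta> \<tau> x) (sw \<theta> \<tau> y) = glue_dist dX dY \<theta> \<tau> x y"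
    by (rule sw_dist[OF msX msY th ta x y])
  show ?thesis
    unfolding geodesic_path_def dd
  proof (intro conjI)
    show "(\<lambda>t. sw \<theta> \<tau> (g t)) \<in> {0..glue_dist dX dY \<theta> \<tau> x y} \<rightarrow> glue_carrier Y X \<theta>"
    proof (rule Pi_I)
      fix t assume t: "t \<in> {0..glue_dist dX dY \<theta> \<tau> x y}"
      show "sw \<theta> \<tau> (g t) \<in> glue_carrier Y X \<theta>"
        by (rule sw_mem[OF _ th ta]) (use gf(1) t in blast)
    qed
    show "sw \<theta> \<tau> (g 0) = sw \<theta> \<tau> x" using gf(2) by simp
    show "sw \<theta> \<tau> (g (glue_dist dX dY \<theta> \<tau> x y)) = sw \<theta> \<tau> y" using gf(3) by simp
    show "\<forall>s\<in>{0..glue_dist dX dY \<theta> \<tau> x y}. \<forall>t\<in>{0..glue_dist dX dY \<theta> \<tau> x y}.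
            glue_dist dY dX \<tau> \<theta> (sw \<theta> \<tau> (g s)) (sw \<theta> \<tau> (g t)) = \<bar>s - t\<bar>"
    proof (intro ballI)
      fix s t assume s: "s \<in> {0..glue_dist dX dY \<theta> \<tau> x y}" and t: "t \<in> {0..glue_dist dX dY \<theta> \<tau> x y}"
      have gs: "g s \<in> glue_carrier X Y \<tau>" "g t \<in> glue_carrier X Y \<tau>" using gf(1) s t by blast+
      show "glue_dist dY dX \<tau> \<theta> (sw \<theta> \<tau> (g s)) (sw \<theta> \<tau> (g t)) = \<bar>s - t\<bar>"
        unfolding sw_dist[OF msX msY th ta gs] using gf(4) s t by blast
    qed
  qed
qed

lemma main_inr:
  assumes msX: "Metric_space X dX" and msY: "Metric_space Y dY" and th: "\<theta> \<in> X" and ta: "\<tau> \<in> Y"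
    and modY: "modulus_wuc Y dY \<eta>Y" and monoX: "monotone_modulus_wuc X dX \<eta>X"
    and aY: "a \<in> Y" "a \<noteq> \<tau>"
    and x: "x \<in> glue_carrier X Y \<tau>" and y: "y \<in> glue_carrier X Y \<tau>"
    and geo: "geodesic_path (glue_carrier X Y \<tau>) (glue_dist dX dY \<theta> \<tau>) x y g"
    and ax: "glue_dist dX dY \<theta> \<tau> (Inr a) x \<le> r" and ay: "glue_dist dX dY \<theta> \<tau> (Inr a) y \<le> r"
    and len: "glue_dist dX dY \<theta> \<tau> x y \<ge> \<epsilon> * r"
    and r: "r > 0" and e: "0 < \<epsilon>" "\<epsilon> \<le> 2"
  shows "glue_dist dX dY \<theta> \<tau> (Inr a) (g (glue_dist dX dY \<theta> \<tau> x y / 2))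
           \<le> (1 - glue_modulus \<eta>X \<eta>Y \<theta> \<tau> (Inr a) r \<epsilon>) * r"
proof -
  have aZ: "Inr a \<in> glue_carrier X Y \<tau>" using aY unfolding glue_carrier_def by auto
  have swa: "sw \<theta> \<tau> (Inr a) = Inl a" by (simp add: sw_def)
  have sd: "\<And>u v. u \<in> glue_carrier X Y \<tau> \<Longrightarrow> v \<in> glue_carrier X Y \<tau> \<Longrightarrow>
      glue_dist dY dX \<tau> \<theta> (sw \<theta> \<tau> u) (sw \<theta> \<tau> v) = glue_dist dX dY \<theta> \<tau> u v"
    by (rule sw_dist[OF msX msY th ta])
  have mid: "g (glue_dist dX dY \<theta> \<tau> x y / 2) \<in> glue_carrier X Y \<tau>"
  proof -
    have "0 < \<epsilon> * r" using e r by simp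
    then have "0 \<le> glue_dist dX dY \<theta> \<tau> x y" using len by linarith
    then show ?thesis using geo_facts(1)[OF geo] by simp
  qed
  have c: "glue_dist dY dX \<tau> \<theta> (Inl a) (sw \<theta> \<tau> (g (glue_dist dY dX \<tau> \<theta> (sw \<theta> \<tau> x) (sw \<theta> \<tau> y) / 2)))
           \<le> (1 - glue_modulus \<eta>Y \<eta>X \<tau> \<theta> (Inl a) r \<epsilon>) * r"
  proof (rule main_inl[OF msY msX ta th modY monoX aY(1) sw_mem[OF x th ta] sw_mem[OF y th ta]
        sw_geo[OF msX msY th ta x y geo] _ _ _ r e])
    show "glue_dist dY dX \<tau> \<theta> (Inl a) (sw \<theta> \<tau> x) \<le> r" using sd[OF aZ x] ax swa by simp
    show "glue_dist dY dX \<tau> \<theta> (Inl a) (sw \<theta> \<tau> y) \<le> r" using sd[OF aZ y] ay swa by simp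
    show "\<epsilon> * r \<le> glue_dist dY dX \<tau> \<theta> (sw \<theta> \<tau> x) (sw \<theta> \<tau> y)" using sd[OF x y] len by simp
  qed
  have e1: "glue_dist dY dX \<tau> \<theta> (sw \<theta> \<tau> x) (sw \<theta> \<tau> y) = glue_dist dX dY \<theta> \<tau> x y"
    by (rule sd[OF x y])
  have e2: "glue_dist dY dX \<tau> \<theta> (Inl a) (sw \<theta> \<tau> (g (glue_dist dX dY \<theta> \<tau> x y / 2)))
      = glue_dist dX dY \<theta> \<tau> (Inr a) (g (glue_dist dX dY \<theta> \<tau> x y / 2))"
    using sd[OF aZ mid] unfolding swa .
  have e3: "glue_modulus \<eta>Y \<eta>X \<tau> \<theta> (Inl a) r \<epsilon> = glue_modulus \<eta>X \<eta>Y \<theta> \<tau> (Inr a) r \<epsilon>"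
    by simp
  show ?thesis using c unfolding e1 e2 e3 .
qed

lemma pos_modulus:
  assumes modX: "modulus_wuc X dX \<eta>X" and modY: "modulus_wuc Y dY \<eta>Y" and th: "\<theta> \<in> X" and ta: "\<tau> \<in> Y"
    and a: "a \<in> glue_carrier X Y \<tau>" and r: "r > 0" and e: "0 < \<epsilon>" "\<epsilon> \<le> 2"
  shows "0 < glue_modulus \<eta>X \<eta>Y \<theta> \<tau> a r \<epsilon> \<and> glue_modulus \<eta>X \<eta>Y \<theta> \<tau> a r \<epsilon> \<le> 1"
proof -
  have e4: "0 < \<epsilon>/4" "\<epsilon>/4 \<le> 2" using e by auto
  have pX: "\<And>b e'. b \<in> X \<Longrightarrow> 0 < e' \<Longrightarrow> e' \<le> 2 \<Longrightarrow> 0 < \<eta>X b r e'"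
    using modX r unfolding modulus_wuc_def by blast
  have pY: "\<And>b e'. b \<in> Y \<Longrightarrow> 0 < e' \<Longrightarrow> e' \<le> 2 \<Longrightarrow> 0 < \<eta>Y b r e'"
    using modY r unfolding modulus_wuc_def by blast
  have le: "min c (min d (min (\<epsilon>/4) f)) \<le> 1" for c d f :: real using e by linarith
  show ?thesis
  proof (cases a)
    case (Inl b)
    then have b: "b \<in> X" using a unfolding glue_carrier_def by auto
    have "0 < \<eta>X b r \<epsilon>" "0 < \<eta>Y \<tau> r \<epsilon> * \<epsilon> / 2" "0 < \<eta>X b r (\<epsilon>/4)"
      using pX[OF b e] pY[OF ta e] pX[OF b e4] e by auto
    then show ?thesis using Inl e le by (simp add: Min4)
  next
    case (Inr b)
    then have b: "b \<in> Y" using a unfolding glue_carrier_def by auto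
    have "0 < \<eta>Y b r \<epsilon>" "0 < \<eta>X \<theta> r \<epsilon> * \<epsilon> / 2" "0 < \<eta>Y b r (\<epsilon>/4)"
      using pY[OF b e] pX[OF th e] pY[OF b e4] e by auto
    then show ?thesis using Inr e le by (simp add: Min4)
  qed
qed

theorem lemma2p2:
  fixes X :: "'a set" and dX :: "'a \<Rightarrow> 'a \<Rightarrow> real" and \<eta>X :: "'a \<Rightarrow> real \<Rightarrow> real \<Rightarrow> real"
    and Y :: "'b set" and dY :: "'b \<Rightarrow> 'b \<Rightarrow> real" and \<eta>Y :: "'b \<Rightarrow> real \<Rightarrow> real \<Rightarrow> real"
    and \<theta> :: 'a and \<tau> :: 'b
  assumes "geodesic_space X dX" and "geodesic_space Y dY"
    and "monotone_modulus_wuc X dX \<eta>X" and "monotone_modulus_wuc Y dY \<eta>Y"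
    and "\<theta> \<in> X" and "\<tau> \<in> Y"
  shows "weakly_uniformly_convex (glue_carrier X Y \<tau>) (glue_dist dX dY \<theta> \<tau>)
       \<and> modulus_wuc (glue_carrier X Y \<tau>) (glue_dist dX dY \<theta> \<tau>) (glue_modulus \<eta>X \<eta>Y \<theta> \<tau>)"
proof -
  have msX: "Metric_space X dX" and msY: "Metric_space Y dY"
    using assms(1,2) unfolding geodesic_space_def by auto
  have modX: "modulus_wuc X dX \<eta>X" and modY: "modulus_wuc Y dY \<eta>Y"
    using assms(3,4) unfolding monotone_modulus_wuc_def by auto
  note th = assms(5) and ta = assms(6)
  have M: "modulus_wuc (glue_carrier X Y \<tau>) (glue_dist dX dY \<theta> \<tau>) (glue_modulus \<eta>X \<eta>Y \<theta> \<tau>)"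
    unfolding modulus_wuc_def
  proof (rule conjI; intro ballI allI impI)
    fix a and r \<epsilon> :: real assume a: "a \<in> glue_carrier X Y \<tau>" and r: "0 < r" and e: "0 < \<epsilon> \<and> \<epsilon> \<le> 2"
    show "0 < glue_modulus \<eta>X \<eta>Y \<theta> \<tau> a r \<epsilon> \<and> glue_modulus \<eta>X \<eta>Y \<theta> \<tau> a r \<epsilon> \<le> 1"
      using pos_modulus[OF modX modY th ta a r] e by auto
  next
    fix a x y g and r \<epsilon> :: real
    assume a: "a \<in> glue_carrier X Y \<tau>" and r: "0 < r" and e: "0 < \<epsilon> \<and> \<epsilon> \<le> 2"
      and x: "x \<in> glue_carrier X Y \<tau>" and y: "y \<in> glue_carrier X Y \<tau>"
      and H: "geodesic_path (glue_carrier X Y \<tau>) (glue_dist dX dY \<theta> \<tau>) x y g \<and>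
         glue_dist dX dY \<theta> \<tau> a x \<le> r \<and> glue_dist dX dY \<theta> \<tau> a y \<le> r \<and>
         \<epsilon> * r \<le> glue_dist dX dY \<theta> \<tau> x y"
    show "glue_dist dX dY \<theta> \<tau> a (g (glue_dist dX dY \<theta> \<tau> x y / 2))
          \<le> (1 - glue_modulus \<eta>X \<eta>Y \<theta> \<tau> a r \<epsilon>) * r"
    proof (cases a)
      case (Inl b)
      then have b: "b \<in> X" using a unfolding glue_carrier_def by auto
      show ?thesis unfolding Inl
        by (rule main_inl[OF msX msY th ta modX assms(4) b x y]) (use H Inl r e in auto)
    next
      case (Inr b)
      then have b: "b \<in> Y" "b \<noteq> \<tau>" using a unfolding glue_carrier_def by auto
      show ?thesis unfolding Inr
        by (rule main_inr[OF msX msY th ta modY assms(3) b x y]) (use H Inr r e in auto)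
    qed
  qed
  then show ?thesis unfolding weakly_uniformly_convex_def by blast
qed

end
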